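(* For any positive integers $m$ and $s_1,\ldots,s_m$ there is a constant $c=c(s_1,\ldots,s_m)$ such that the following holds: if $n=p_1^{s_1}\cdots p_m^{s_m}$ with primes $p_1<p_2<\cdots<p_m$ and $p_1>c$, then the $n\times n$ square has no perfect Mondrian partition.
   Context: A Mondrian partition of an $n\times n$ square ($n$ a positive integer) is a dissection of the square into $k\ge 2$ non-overlapping rectangles with positive integer side lengths which are pairwise non-congruent (rectangles of dimensions $a\times b$ and $b\times a$ count as congruent). It is perfect if all its rectangles have the same area (i.e., its defect, the difference between the largest and smallest areas, is $0$). *)

theory Defs
  imports "HOL-Analysis.Analysis"
begin

text \<open>A rectangle is given by its lower-left corner (x, y) (real coordinates)
  and its positive integer width w and height h: (x, y, w, h).\<close>

type_synonym rect = "real \<times> real \<times> nat \<times> nat"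

definition rect_set :: "rect \<Rightarrow> (real \<times> real) set" where
  "rect_set r = (case r of (x, y, w, h) \<Rightarrow> {x..x + real w} \<times> {y..y + real h})"

definition rect_interior :: "rect \<Rightarrow> (real \<times> real) set" where
  "rect_interior r = (case r of (x, y, w, h) \<Rightarrow> {x<..<x + real w} \<times> {y<..<y + real h})"

definition rect_w :: "rect \<Rightarrow> nat" where "rect_w r = fst (snd (snd r))"
definition rect_h :: "rect \<Rightarrow> nat" where "rect_h r = snd (snd (snd r))"
definition rect_area :: "rect \<Rightarrow> nat" where "rect_area r = rect_w r * rect_h r"

definition congruent_rects :: "rect \<Rightarrow> rect \<Rightarrow> bool" where
  "congruent_rects r1 r2 \<longleftrightarrow>
     (rect_w r1 = rect_w r2 \<and> rect_h r1 = rect_h r2) \<or>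
     (rect_w r1 = rect_h r2 \<and> rect_h r1 = rect_w r2)"

definition mondrian_partition :: "nat \<Rightarrow> rect set \<Rightarrow> bool" where
  "mondrian_partition n R \<longleftrightarrow>
     finite R \<and> card R \<ge> 2 \<and>
     (\<forall>r\<in>R. rect_w r > 0 \<and> rect_h r > 0) \<and>
     (\<Union>r\<in>R. rect_set r) = {0..real n} \<times> {0..real n} \<and>
     (\<forall>r1\<in>R. \<forall>r2\<in>R. r1 \<noteq> r2 \<longrightarrow> rect_interior r1 \<inter> rect_interior r2 = {}) \<and>
     (\<forall>r1\<in>R. \<forall>r2\<in>R. r1 \<noteq> r2 \<longrightarrow> \<not> congruent_rects r1 r2)"

definition perfect_mondrian_partition :: "nat \<Rightarrow> rect set \<Rightarrow> bool" where
  "perfect_mondrian_partition n R \<longleftrightarrow>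
     mondrian_partition n R \<and> (\<forall>r1\<in>R. \<forall>r2\<in>R. rect_area r1 = rect_area r2)"

end

theory Submission imports Defs "HOL-Computational_Algebra.Primes" begin
lemma rect_set_cbox: "rect_set (x,y,w,h) = cbox (x,y) (x+real w, y+real h)"
  by (simp add: rect_set_def cbox_Pair_eq)
lemma rect_int_box: "rect_interior (x,y,w,h) = box (x,y) (x+real w, y+real h)"
  by (auto simp: rect_interior_def box_def Basis_prod_def inner_prod_def)
lemma meas_rect: "measure lborel (rect_set r) = real (rect_area r)"
  apply (cases r)
  apply (simp add: rect_set_cbox rect_area_def rect_w_def rect_h_def content_Pair)
  done
lemma meas_rect_int: "measure lborel (rect_interior r) = real (rect_area r)"
  apply (cases r)
  apply (simp add: rect_int_box rect_area_def rect_w_def rect_h_def measure_lborel_box_eq Basis_prod_def)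
  done
lemma rect_set_f: "rect_set r \<in> fmeasurable lborel"
  by (cases r) (simp add: rect_set_cbox)
lemma rect_int_f: "rect_interior r \<in> fmeasurable lborel"
  by (cases r) (simp add: rect_int_box)
lemma int_sub: "rect_interior r \<subseteq> rect_set r"
  by (cases r) (auto simp: rect_interior_def rect_set_def)

lemma area_eq:
  assumes P: "perfect_mondrian_partition n R" and r0: "r0 \<in> R"
  shows "card R * rect_area r0 = n^2"
proof -
  have P1: "finite R" "(\<Union>r\<in>R. rect_set r) = {0..real n} \<times> {0..real n}"
    "\<forall>r1\<in>R. \<forall>r2\<in>R. r1 \<noteq> r2 \<longrightarrow> rect_interior r1 \<inter> rect_interior r2 = {}"
    "\<forall>r1\<in>R. \<forall>r2\<in>R. rect_area r1 = rect_area r2"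
    by (insert P[unfolded perfect_mondrian_partition_def mondrian_partition_def], elim conjE, assumption)+
  have fin: "finite R" by (rule P1(1))
  have A: "\<And>r. r \<in> R \<Longrightarrow> rect_area r = rect_area r0" using P1(4) r0 by blast
  have U: "(\<Union>r\<in>R. rect_set r) = cbox (0,0) (real n, real n)"
    unfolding cbox_Pair_eq unfolding cbox_interval by (rule P1(2))
  have D: "\<And>r1 r2. r1 \<in> R \<Longrightarrow> r2 \<in> R \<Longrightarrow> r1 \<noteq> r2 \<Longrightarrow> rect_interior r1 \<inter> rect_interior r2 = {}"
    using P1(3) by blast
  have S: "measure lborel (cbox (0::real,0::real) (real n, real n)) = real n * real n"
    by (simp add: content_Pair)
  have sum: "(\<Sum>r\<in>R. real (rect_area r)) = real (card R) * real (rect_area r0)"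
    using A by simp
  have "measure lborel (\<Union>r\<in>R. rect_set r) \<le> (\<Sum>r\<in>R. measure lborel (rect_set r))"
    by (rule measure_UNION_le[OF fin]) (rule fmeasurableD[OF rect_set_f])
  hence le1: "real n * real n \<le> real (card R) * real (rect_area r0)"
    unfolding U S meas_rect sum .
  have "measure lborel (\<Union>r\<in>R. rect_interior r) = (\<Sum>r\<in>R. measure lborel (rect_interior r))"
    apply (rule measure_UNION'[OF fin])
     apply (rule rect_int_f)
    using D unfolding pairwise_def disjnt_def by blast
  moreover have "measure lborel (\<Union>r\<in>R. rect_interior r) \<le> measure lborel (cbox (0::real,0::real) (real n, real n))"
  proof (rule measure_mono_fmeasurable)
    show "(\<Union>r\<in>R. rect_interior r) \<subseteq> cbox (0, 0) (real n, real n)"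
      unfolding U[symmetric] using int_sub by blast
    show "(\<Union>r\<in>R. rect_interior r) \<in> sets lborel"
      using fin by (intro sets.finite_UN) (use rect_int_f fmeasurableD in blast)+
  qed simp
  ultimately have "real (card R) * real (rect_area r0) \<le> real n * real n"
    unfolding meas_rect_int sum S by simp
  with le1 have "real (card R) * real (rect_area r0) = real n * real n" by linarith
  hence "card R * rect_area r0 = n * n" by (metis of_nat_eq_iff of_nat_mult)
  thus ?thesis by (simp add: power2_eq_square)
qed

lemma divcard_mult:
  fixes a b :: nat assumes "a > 0" "b > 0"
  shows "card {d. d dvd a*b} \<le> card {d. d dvd a} * card {d. d dvd b}"
proof -
  have "{d. d dvd a*b} \<subseteq> (\<lambda>x. fst x * snd x) ` ({d. d dvd a} \<times> {d. d dvd b})"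
  proof
    fix d assume "d \<in> {d. d dvd a*b}"
    then obtain u v where "d = u * v" "u dvd a" "v dvd b" using division_decomp by blast
    thus "d \<in> (\<lambda>x. fst x * snd x) ` ({d. d dvd a} \<times> {d. d dvd b})" by force
  qed
  hence "card {d. d dvd a*b} \<le> card ((\<lambda>x. fst x * snd x) ` ({d. d dvd a} \<times> {d. d dvd b}))"
    using assms by (intro card_mono finite_imageI finite_cartesian_product) (auto intro: finite_divisors_nat)
  also have "\<dots> \<le> card ({d. d dvd a} \<times> {d. d dvd b})" by (rule card_image_le) (use assms in \<open>auto intro: finite_cartesian_product finite_divisors_nat\<close>)
  finally show ?thesis by (simp add: card_cartesian_product)
qed

lemma divcard_pp:
  fixes p :: nat assumes "prime p" shows "card {d. d dvd p^e} \<le> e + 1"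
proof -
  have "{d. d dvd p^e} = (\<lambda>i. p^i) ` {..e}" using divides_primepow_nat[OF assms] by auto
  thus ?thesis using card_image_le[of "{..e}" "\<lambda>i. p^i"] by simp
qed

lemma divcard_prod:
  fixes p e :: "nat \<Rightarrow> nat" assumes "\<forall>i<m. prime (p i)"
  shows "card {d. d dvd (\<Prod>i<m. p i ^ e i)} \<le> (\<Prod>i<m. e i + 1)"
  using assms
proof (induction m)
  case 0 thus ?case by simp
next
  case (Suc m)
  have pos: "(\<Prod>i<m. p i ^ e i) > 0" using Suc.prems
    by (auto intro!: prod_pos simp: prime_gt_0_nat)
  have pp: "p m ^ e m > 0" using Suc.prems by (simp add: prime_gt_0_nat)
  have "card {d. d dvd (\<Prod>i<Suc m. p i ^ e i)} \<le> card {d. d dvd (\<Prod>i<m. p i ^ e i)} * card {d. d dvd p m ^ e m}"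
    using divcard_mult[OF pos pp] by simp
  also have "\<dots> \<le> (\<Prod>i<m. e i + 1) * (e m + 1)"
    using Suc divcard_pp[of "p m" "e m"] by (intro mult_mono) auto
  finally show ?case by simp
qed
theorem mainTheorem6:
  fixes m :: nat and s :: "nat \<Rightarrow> nat"
  assumes "m \<ge> 1" and "\<forall>i<m. s i > 0"
  shows "\<exists>c::nat. \<forall>(p :: nat \<Rightarrow> nat) (n :: nat).
           (\<forall>i<m. prime (p i)) \<and> (\<forall>i j. i < j \<and> j < m \<longrightarrow> p i < p j) \<and>
           p 0 > c \<and> n = (\<Prod>i<m. p i ^ s i)
           \<longrightarrow> \<not> (\<exists>R. perfect_mondrian_partition n R)"
proof (intro exI allI impI notI)
  fix p :: "nat \<Rightarrow> nat" and n
  define c where "c = (\<Prod>i<m. 2 * s i + 1)"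
  assume H: "(\<forall>i<m. prime (p i)) \<and> (\<forall>i j. i < j \<and> j < m \<longrightarrow> p i < p j) \<and>
           p 0 > c \<and> n = (\<Prod>i<m. p i ^ s i)"
  assume "\<exists>R. perfect_mondrian_partition n R"
  then obtain R where P: "perfect_mondrian_partition n R" by blast
  have pr: "\<forall>i<m. prime (p i)" and mono: "\<forall>i j. i < j \<and> j < m \<longrightarrow> p i < p j"
    and pc: "p 0 > c" and nd: "n = (\<Prod>i<m. p i ^ s i)" using H by auto
  have P1: "finite R" "2 \<le> card R" "\<forall>r\<in>R. 0 < rect_w r \<and> 0 < rect_h r"
    "\<forall>r1\<in>R. \<forall>r2\<in>R. r1 \<noteq> r2 \<longrightarrow> \<not> congruent_rects r1 r2"
    "\<forall>r1\<in>R. \<forall>r2\<in>R. rect_area r1 = rect_area r2"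
    by (insert P[unfolded perfect_mondrian_partition_def mondrian_partition_def], elim conjE, assumption)+
  have "R \<noteq> {}" using P1(2) by auto
  then obtain r0 where r0: "r0 \<in> R" by blast
  define A where "A = rect_area r0"
  have kA: "card R * A = n^2" using area_eq[OF P r0] A_def by simp
  have n2: "n^2 = (\<Prod>i<m. p i ^ (2 * s i))"
  proof -
    have "n^2 = (\<Prod>i<m. (p i ^ s i)^2)" unfolding nd by (simp add: prod_power_distrib)
    also have "\<dots> = (\<Prod>i<m. p i ^ (2 * s i))" by (simp add: power_mult[symmetric] mult.commute)
    finally show ?thesis .
  qed
  have ppos: "\<And>i. i \<in> {..<m} \<Longrightarrow> 0 < p i ^ (2 * s i)" using pr by (simp add: prime_gt_0_nat)
  have npos: "n^2 > 0" unfolding n2 by (rule prod_pos) (rule ppos)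
  have inj: "inj_on rect_w R"
  proof (rule inj_onI)
    fix r1 r2 assume r1: "r1 \<in> R" and r2: "r2 \<in> R" and w: "rect_w r1 = rect_w r2"
    have "rect_w r1 * rect_h r1 = rect_w r2 * rect_h r2"
    proof -
      have "rect_area r1 = rect_area r2" using P1(5) r1 r2 by blast
      thus ?thesis unfolding rect_area_def .
    qed
    moreover have "rect_w r1 > 0" using P1(3) r1 by blast
    ultimately have "rect_h r1 = rect_h r2" using w by simp
    hence "congruent_rects r1 r2" using w by (simp add: congruent_rects_def)
    thus "r1 = r2" using P1(4) r1 r2 by blast
  qed
  have sub: "rect_w ` R \<subseteq> {d. d dvd n^2}"
  proof
    fix d assume "d \<in> rect_w ` R"
    then obtain r where r: "r \<in> R" "d = rect_w r" by blast
    have "rect_area r = A" unfolding A_def using P1(5) r r0 by blast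
    hence "d dvd A" using r by (auto simp: rect_area_def)
    moreover have "A dvd n^2" using kA by (metis dvd_triv_right)
    ultimately show "d \<in> {d. d dvd n^2}" by (auto intro: dvd_trans)
  qed
  have "card R = card (rect_w ` R)" using card_image[OF inj] by simp
  also have "\<dots> \<le> card {d. d dvd n^2}"
    using sub npos by (intro card_mono) (auto intro: finite_divisors_nat)
  also have "\<dots> \<le> c" unfolding n2 c_def using divcard_prod[OF pr, of "\<lambda>i. 2 * s i"] by simp
  finally have kc: "card R \<le> c" .
  have "card R \<noteq> 1" using P1(2) by simp
  then obtain q where q: "prime q" "q dvd card R" using prime_factor_nat by blast
  have "q dvd n^2" using q(2) kA by (metis dvd_mult2)
  hence "q dvd (\<Prod>i<m. p i ^ (2 * s i))" using n2 by simp
  then obtain i where i: "i < m" "q dvd p i ^ (2 * s i)"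
    using prime_dvd_prod_iff[of "{..<m}" q] q(1) by auto
  have "q dvd p i" by (rule prime_dvd_power[OF q(1) i(2)])
  hence qi: "q = p i" using primes_dvd_imp_eq[OF q(1)] pr i(1) by blast
  have "p 0 \<le> p i" using mono i(1) by (cases "i = 0") (auto intro: less_imp_le)
  moreover have "q \<le> card R" using q(2) P1(2) by (intro dvd_imp_le) auto
  ultimately show False using qi kc pc by linarith
qed

end
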